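(* Let $\mathbb F\in\{\mathbb C,\mathbb R\}$, $n>1$, and $\gamma\in\mathbb F^n$ with $\operatorname{diag}(\gamma_1,\dots,\gamma_n)$ not proportional to the identity. Then the functions $|X^{\varkappa,n}_{1,k}|$, $k=1,\dots,[n/2]$, where $\varkappa=n-k+1$, are functionally independent (global) relative invariants of the coadjoint action ${\rm Ad}^*_{{\rm T}_\gamma(n)}$ on $\mathfrak t_\gamma^*(n)$.
   Context: $\mathfrak t_\gamma(n)$ is the Lie algebra over $\mathbb F$ with basis $e_{ij}$ ($1\leqslant i<j\leqslant n$), $f$, brackets $[e_{ij},e_{i'j'}]=\delta_{i'j}e_{ij'}-\delta_{ij'}e_{i'j}$, $[f,e_{ij}]=(\gamma_i-\gamma_j)e_{ij}$; it is the Lie algebra of ${\rm T}_\gamma(n)=\{B\text{ nonsingular upper triangular}\mid\exists\varepsilon:\ b_{ii}=e^{\gamma_i\varepsilon}\}$ with $e_{ij}\sim E^n_{ij}$, $f\sim\operatorname{diag}(\gamma)$ and coadjoint action $({\rm Ad}^*_B\xi)(y)=\xi(B^{-1}yB)$. $x_{ji}$ ($i<j$) is the coordinate on $\mathfrak t_\gamma^*(n)$ dual to $e_{ij}$; $X$ is the strictly lower triangular matrix with entries $x_{ij}$ ($i>j$); $X^{i_1,i_2}_{j_1,j_2}$ is the submatrix with rows $i_1..i_2$ and columns $j_1..j_2$, $|\cdot|$ the determinant. A function $F$ on a $G$-space $M$ is a (global) relative invariant if $F(g\cdot x)=\mu(g,x)F(x)$ for all $g\in G$, $x\in M$, for some multiplier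 $\mu\colon G\times M\to\mathbb F$. *)

theory Defs
  imports "HOL-Analysis.Analysis" "Jordan_Normal_Form.Determinant"
begin

(* Indices are 0-based: the paper's index i in 1..n corresponds to i-1 here.
   gamma :: nat => 'a gives gamma_1..gamma_n as gamma 0 .. gamma (n-1). *)

definition diag_gamma :: "nat \<Rightarrow> (nat \<Rightarrow> 'a::field) \<Rightarrow> 'a mat" where
  "diag_gamma n \<gamma> = mat n n (\<lambda>(i,j). if i = j then \<gamma> i else 0)"

definition mat_inv :: "'a::field mat \<Rightarrow> 'a mat" where
  "mat_inv B = (THE C. inverts_mat B C \<and> inverts_mat C B)"

definition T_gamma :: "nat \<Rightarrow> (nat \<Rightarrow> 'a::{real_normed_field,banach}) \<Rightarrow> 'a mat set" where
  "T_gamma n \<gamma> = {B. B \<in> carrier_mat n n \<and> upper_triangular B \<and> det B \<noteq> 0 \<and>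
       (\<exists>\<epsilon>. \<forall>i<n. B $$ (i,i) = exp (\<gamma> i * \<epsilon>))}"

definition strict_upper :: "nat \<Rightarrow> 'a::zero mat set" where
  "strict_upper n = {N. N \<in> carrier_mat n n \<and> (\<forall>i<n. \<forall>j<n. j \<le> i \<longrightarrow> N $$ (i,j) = 0)}"

(* An element of t_gamma(n) is written a f + sum_{i<j} N_ij e_ij and represented by (a, N),
   N strictly upper triangular; as a matrix it is a diag(gamma) + N. *)
definition lie_elem_mat :: "nat \<Rightarrow> (nat \<Rightarrow> 'a::field) \<Rightarrow> 'a \<times> 'a mat \<Rightarrow> 'a mat" where
  "lie_elem_mat n \<gamma> y = fst y \<cdot>\<^sub>m diag_gamma n \<gamma> + snd y"

(* The dual space t_gamma^*(n): an element xi is given by its coordinates (X, z):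
   X strictly lower triangular with X $$ (j,i) = x_{ji} = xi(e_ij) (i<j), and z = xi(f). *)
definition dual_space :: "nat \<Rightarrow> ('a::zero mat \<times> 'a) set" where
  "dual_space n = {(X,z). X \<in> carrier_mat n n \<and> (\<forall>i<n. \<forall>j<n. i \<le> j \<longrightarrow> X $$ (i,j) = 0)}"

definition pairing :: "nat \<Rightarrow> 'a::comm_ring_1 mat \<times> 'a \<Rightarrow> 'a \<times> 'a mat \<Rightarrow> 'a" where
  "pairing n xi y = fst y * snd xi +
     (\<Sum>j<n. \<Sum>i<j. fst xi $$ (j,i) * snd y $$ (i,j))"

(* the element B^{-1} y B of t_gamma(n) (conjugation preserves the diagonal, so the f-coefficient
   is unchanged and the remainder is strictly upper triangular) *)
definition conj_elem :: "nat \<Rightarrow> (nat \<Rightarrow> 'a::field) \<Rightarrow> 'a mat \<Rightarrow> 'a \<times> 'a mat \<Rightarrow> 'a \<times> 'a mat" where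
  "conj_elem n \<gamma> B y =
     (fst y, mat_inv B * lie_elem_mat n \<gamma> y * B - fst y \<cdot>\<^sub>m diag_gamma n \<gamma>)"

definition unit_mat :: "nat \<Rightarrow> nat \<Rightarrow> nat \<Rightarrow> 'a::zero_neq_one mat" where
  "unit_mat n i j = mat n n (\<lambda>(p,q). if p = i \<and> q = j then 1 else 0)"

(* coadjoint action (Ad*_B xi)(y) = xi(B^{-1} y B), expressed in coordinates:
   x'_{ji} = (Ad*_B xi)(e_ij), z' = (Ad*_B xi)(f) *)
definition coadj :: "nat \<Rightarrow> (nat \<Rightarrow> 'a::field) \<Rightarrow> 'a mat \<Rightarrow> 'a mat \<times> 'a \<Rightarrow> 'a mat \<times> 'a" where
  "coadj n \<gamma> B xi =
     (mat n n (\<lambda>(j,i). if i < j then pairing n xi (conj_elem n \<gamma> B (0, unit_mat n i j)) else 0),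
      pairing n xi (conj_elem n \<gamma> B (1, 0\<^sub>m n n)))"

(* |X^{kappa,n}_{1,k}| with kappa = n-k+1: rows kappa..n, columns 1..k (1-based) *)
definition corner_minor :: "nat \<Rightarrow> nat \<Rightarrow> 'a::comm_ring_1 mat \<times> 'a \<Rightarrow> 'a" where
  "corner_minor n k xi = det (mat k k (\<lambda>(p,q). fst xi $$ (n - k + p, q)))"

definition rel_invariant :: "'g set \<Rightarrow> ('g \<Rightarrow> 'm \<Rightarrow> 'm) \<Rightarrow> 'm set \<Rightarrow> ('m \<Rightarrow> 'a::times) \<Rightarrow> bool" where
  "rel_invariant G act M F \<longleftrightarrow> (\<exists>\<mu>. \<forall>g\<in>G. \<forall>x\<in>M. F (act g x) = \<mu> g x * F x)"

(* coordinates on t_gamma^*(n): None = coordinate dual to f, Some (j,i) = x_{ji} (i<j<n) *)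
definition coords :: "nat \<Rightarrow> (nat \<times> nat) option set" where
  "coords n = insert None (Some ` {(j,i). i < j \<and> j < n})"

definition shift_coord :: "nat \<Rightarrow> (nat \<times> nat) option \<Rightarrow> 'a::comm_ring_1 \<Rightarrow> 'a mat \<times> 'a \<Rightarrow> 'a mat \<times> 'a" where
  "shift_coord n c t xi = (case c of
      None \<Rightarrow> (fst xi, snd xi + t)
    | Some (j,i) \<Rightarrow> (fst xi + t \<cdot>\<^sub>m unit_mat n j i, snd xi))"

(* functional independence of the functions F k (k in K) on t_gamma^*(n):
   at some point their differentials (gradients w.r.t. the coordinates) exist and are
   linearly independent, i.e. the Jacobian has maximal rank |K| *)
definition funct_indep :: "nat \<Rightarrow> ('k \<Rightarrow> 'a mat \<times> 'a \<Rightarrow> 'a::{real_normed_field,banach}) \<Rightarrow> 'k set \<Rightarrow> bool" where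
  "funct_indep n F K \<longleftrightarrow>
     (\<exists>xi\<in>dual_space n. \<exists>D.
        (\<forall>k\<in>K. \<forall>c\<in>coords n. ((\<lambda>t. F k (shift_coord n c t xi)) has_field_derivative D k c) (at 0)) \<and>
        (\<forall>a. (\<forall>c\<in>coords n. (\<Sum>k\<in>K. a k * D k c) = 0) \<longrightarrow> (\<forall>k\<in>K. a k = 0)))"

end

theory Submission
  imports Defs
begin

definition Kf :: "nat \<Rightarrow> 'a::comm_ring_1 mat \<Rightarrow> nat \<Rightarrow> nat \<Rightarrow> 'a" where
  "Kf k M a b = (\<Sum>p\<in>{p. p permutes {0..<k}}. signof p *
      (if p a = b then (\<Prod>i\<in>{0..<k}-{a}. M $$ (i, p i)) else 0))"

lemma det_affine:
  fixes M :: "'a::comm_ring_1 mat"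
  assumes M: "M \<in> carrier_mat k k" and a: "a < k"
  shows "det (mat k k (\<lambda>(p,q). M $$ (p,q) + (if p = a \<and> q = b then t else 0)))
         = det M + t * Kf k M a b"
proof -
  let ?N = "mat k k (\<lambda>(p,q). M $$ (p,q) + (if p = a \<and> q = b then t else 0))"
  have N: "?N \<in> carrier_mat k k" by simp
  have "det ?N = (\<Sum>p\<in>{p. p permutes {0..<k}}. signof p * (\<Prod>i = 0..<k. ?N $$ (i, p i)))"
    by (rule det_def'[OF N])
  also have "\<dots> = (\<Sum>p\<in>{p. p permutes {0..<k}}. signof p * (\<Prod>i = 0..<k. M $$ (i, p i))
      + t * (signof p * (if p a = b then (\<Prod>i\<in>{0..<k}-{a}. M $$ (i, p i)) else 0)))"
  proof (rule sum.cong[OF refl])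
    fix p assume "p \<in> {p. p permutes {0..<k}}"
    hence p: "p permutes {0..<k}" by simp
    have pi: "\<And>i. i < k \<Longrightarrow> p i < k" using p permutes_in_image by fastforce
    have "(\<Prod>i = 0..<k. ?N $$ (i, p i)) = ?N $$ (a, p a) * (\<Prod>i\<in>{0..<k}-{a}. ?N $$ (i, p i))"
      using a by (subst prod.remove[of _ a]) auto
    also have "(\<Prod>i\<in>{0..<k}-{a}. ?N $$ (i, p i)) = (\<Prod>i\<in>{0..<k}-{a}. M $$ (i, p i))"
      by (rule prod.cong) (auto simp: pi)
    also have "?N $$ (a, p a) = M $$ (a, p a) + (if p a = b then t else 0)"
      using a pi by simp
    finally have 1: "(\<Prod>i = 0..<k. ?N $$ (i, p i)) =
        (M $$ (a, p a) + (if p a = b then t else 0)) * (\<Prod>i\<in>{0..<k}-{a}. M $$ (i, p i))" .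
    have 2: "(\<Prod>i = 0..<k. M $$ (i, p i)) = M $$ (a, p a) * (\<Prod>i\<in>{0..<k}-{a}. M $$ (i, p i))"
      using a by (subst prod.remove[of _ a]) auto
    show "signof p * (\<Prod>i = 0..<k. ?N $$ (i, p i)) = signof p * (\<Prod>i = 0..<k. M $$ (i, p i))
      + t * (signof p * (if p a = b then (\<Prod>i\<in>{0..<k}-{a}. M $$ (i, p i)) else 0))"
      unfolding 1 2 by (simp add: algebra_simps)
  qed
  also have "\<dots> = det M + t * Kf k M a b"
    unfolding Kf_def det_def'[OF M] by (simp add: sum.distrib sum_distrib_left)
  finally show ?thesis .
qed

lemma det_unit_row:
  fixes M :: "'a::comm_ring_1 mat"
  assumes M: "M \<in> carrier_mat k k" and a: "a < k"
    and row: "\<And>q. q < k \<Longrightarrow> M $$ (a,q) = (if q = b then 1 else 0)"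
  shows "det M = Kf k M a b"
  unfolding det_def'[OF M] Kf_def
proof (rule sum.cong[OF refl])
  fix p assume "p \<in> {p. p permutes {0..<k}}"
  hence p: "p permutes {0..<k}" by simp
  have pi: "\<And>i. i < k \<Longrightarrow> p i < k" using p permutes_in_image by fastforce
  have 2: "(\<Prod>i = 0..<k. M $$ (i, p i)) = M $$ (a, p a) * (\<Prod>i\<in>{0..<k}-{a}. M $$ (i, p i))"
    using a by (subst prod.remove[of _ a]) auto
  show "signof p * (\<Prod>i = 0..<k. M $$ (i, p i)) =
        signof p * (if p a = b then \<Prod>i\<in>{0..<k} - {a}. M $$ (i, p i) else 0)"
    unfolding 2 using row[OF pi[OF a]] by simp
qed


definition antid :: "nat \<Rightarrow> 'a::comm_ring_1 mat" where
  "antid k = mat k k (\<lambda>(p,q). if p + q = k - 1 then 1 else 0)"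

lemma antid_sq: "antid k * antid k = (1\<^sub>m k :: 'a::comm_ring_1 mat)"
proof (rule eq_matI)
  fix p r assume p: "p < dim_row (1\<^sub>m k :: 'a mat)" and r: "r < dim_col (1\<^sub>m k :: 'a mat)"
  hence pk: "p < k" and rk: "r < k" by auto
  have "(antid k * antid k :: 'a mat) $$ (p, r) =
     (\<Sum>q\<in>{0..<k}. (if p + q = k - 1 then 1 else 0) * (if q + r = k - 1 then 1 else 0))"
    using pk rk unfolding antid_def by (simp add: scalar_prod_def)
  also have "\<dots> = 
     (\<Sum>q\<in>{0..<k}. (if q = k - 1 - p then (if q + r = k - 1 then 1 else 0) else 0))"
    by (rule sum.cong[OF refl]) (use pk in auto)
  also have "\<dots> = (if k - 1 - p + r = k - 1 then 1 else 0)"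
    using pk by (subst sum.delta) auto
  also have "\<dots> = (1\<^sub>m k :: 'a mat) $$ (p, r)" using pk rk by auto
  finally show "(antid k * antid k :: 'a mat) $$ (p, r) = (1\<^sub>m k :: 'a mat) $$ (p, r)" .
qed (auto simp: antid_def)

lemma det_antid: "det (antid k :: 'a::field mat) \<noteq> 0"
proof -
  have "det (antid k * antid k :: 'a mat) = 1" by (simp add: antid_sq)
  hence "det (antid k :: 'a mat) * det (antid k) = 1"
    by (subst (asm) det_mult[of _ k]) (auto simp: antid_def)
  thus ?thesis by auto
qed

lemma mat_inv_props:
  fixes B :: "'a::field mat"
  assumes B: "B \<in> carrier_mat n n" and d: "det B \<noteq> 0"
  shows "mat_inv B \<in> carrier_mat n n \<and> B * mat_inv B = 1\<^sub>m n \<and> mat_inv B * B = 1\<^sub>m n"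
proof -
  have "B \<in> Units (ring_mat TYPE('a) n ())" by (rule det_non_zero_imp_unit[OF B d])
  then obtain C where C: "C \<in> carrier_mat n n" and BC: "B * C = 1\<^sub>m n" and CB: "C * B = 1\<^sub>m n"
    unfolding Units_def ring_mat_def by auto
  have uniq: "C' = C" if h: "inverts_mat B C' \<and> inverts_mat C' B" for C'
  proof -
    from h have 1: "B * C' = 1\<^sub>m n" and 2: "C' * B = 1\<^sub>m (dim_row C')"
      using B unfolding inverts_mat_def by auto
    have "dim_col C' = n" using arg_cong[OF 1, of dim_col] by simp
    moreover have "dim_row C' = n" using arg_cong[OF 2, of dim_col] B by simp
    ultimately have C'c: "C' \<in> carrier_mat n n" by auto
    have "C' = C' * (B * C)" using C'c by (simp add: BC)
    also have "\<dots> = (C' * B) * C" using C'c B C by simp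
    also have "\<dots> = C" using 2 C'c C by simp
    finally show ?thesis .
  qed
  have "inverts_mat B C \<and> inverts_mat C B" using BC CB B C unfolding inverts_mat_def by auto
  hence "mat_inv B = C" unfolding mat_inv_def using uniq by (rule the_equality)
  thus ?thesis using C BC CB by simp
qed


lemma conj_entry:
  fixes B C :: "'a::field mat"
  assumes B: "B \<in> carrier_mat n n" and C: "C \<in> carrier_mat n n" and Ci: "mat_inv B = C"
    and i: "i < n" and j: "j < n" and i': "i' < n" and j': "j' < n"
  shows "snd (conj_elem n \<gamma> B (0, unit_mat n i j)) $$ (i',j') = C $$ (i',i) * B $$ (j,j')"
proof -
  let ?E = "0 \<cdot>\<^sub>m diag_gamma n \<gamma> + (unit_mat n i j :: 'a mat)"
  have Ec: "?E \<in> carrier_mat n n" by (simp add: diag_gamma_def unit_mat_def)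
  have Ee: "\<And>a b. a < n \<Longrightarrow> b < n \<Longrightarrow> ?E $$ (a,b) = (if a = i \<and> b = j then 1 else 0)"
    by (simp add: diag_gamma_def unit_mat_def)
  have CE: "\<And>b. b < n \<Longrightarrow> (C * ?E) $$ (i',b) = C $$ (i',i) * (if b = j then 1 else 0)"
  proof -
    fix b assume b: "b < n"
    have "(C * ?E) $$ (i',b) = (\<Sum>a\<in>{0..<n}. C $$ (i',a) * ?E $$ (a,b))"
      using carrier_matD[OF C] carrier_matD[OF Ec] i' b by (simp add: scalar_prod_def)
    also have "\<dots> = (\<Sum>a\<in>{0..<n}. if a = i then C $$ (i',a) * (if b = j then 1 else 0) else 0)"
      by (rule sum.cong[OF refl]) (use Ee b in auto)
    also have "\<dots> = C $$ (i',i) * (if b = j then 1 else 0)" using i by (subst sum.delta) auto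
    finally show "(C * ?E) $$ (i',b) = C $$ (i',i) * (if b = j then 1 else 0)" .
  qed
  have "(C * ?E * B) $$ (i',j') = (\<Sum>b\<in>{0..<n}. (C * ?E) $$ (i',b) * B $$ (b,j'))"
    using carrier_matD[OF C] carrier_matD[OF Ec] carrier_matD[OF B] i' j' by (simp add: scalar_prod_def)
  also have "\<dots> = (\<Sum>b\<in>{0..<n}. if b = j then C $$ (i',i) * B $$ (b,j') else 0)"
    by (rule sum.cong[OF refl]) (simp add: CE)
  also have "\<dots> = C $$ (i',i) * B $$ (j,j')" using j by (subst sum.delta) auto
  finally have 1: "(C * ?E * B) $$ (i',j') = C $$ (i',i) * B $$ (j,j')" .
  have 2: "snd (conj_elem n \<gamma> B (0, unit_mat n i j)) = C * ?E * B - 0 \<cdot>\<^sub>m diag_gamma n \<gamma>"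
    unfolding conj_elem_def lie_elem_mat_def Ci by simp
  show ?thesis unfolding 2
    using 1 i' j' by (simp add: diag_gamma_def del: assoc_mult_mat)
qed

lemma pairing_conj:
  fixes B C :: "'a::field mat"
  assumes xi: "xi \<in> dual_space n"
    and B: "B \<in> carrier_mat n n" and C: "C \<in> carrier_mat n n" and Ci: "mat_inv B = C"
    and i: "i < n" and j: "j < n"
  shows "pairing n xi (conj_elem n \<gamma> B (0, unit_mat n i j)) = (B * fst xi * C) $$ (j,i)"
proof -
  obtain X z where xz: "xi = (X,z)" by (cases xi)
  have X: "X \<in> carrier_mat n n" and X0: "\<And>a b. a < n \<Longrightarrow> b < n \<Longrightarrow> a \<le> b \<Longrightarrow> X $$ (a,b) = 0"
    using xi xz unfolding dual_space_def by auto
  have "pairing n xi (conj_elem n \<gamma> B (0, unit_mat n i j)) =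
     (\<Sum>j'<n. \<Sum>i'<j'. X $$ (j',i') * (C $$ (i',i) * B $$ (j,j')))"
    unfolding pairing_def xz fst_conv snd_conv
  proof -
    have "fst (conj_elem n \<gamma> B (0, unit_mat n i j)) = 0" by (simp add: conj_elem_def)
    moreover have "(\<Sum>j'<n. \<Sum>i'<j'. X $$ (j',i') * snd (conj_elem n \<gamma> B (0, unit_mat n i j)) $$ (i',j'))
       = (\<Sum>j'<n. \<Sum>i'<j'. X $$ (j',i') * (C $$ (i',i) * B $$ (j,j')))"
      by (rule sum.cong[OF refl], rule sum.cong[OF refl]) (simp add: conj_entry[OF B C Ci i j])
    ultimately show "fst (conj_elem n \<gamma> B (0, unit_mat n i j)) * z +
      (\<Sum>j'<n. \<Sum>i'<j'. X $$ (j',i') * snd (conj_elem n \<gamma> B (0, unit_mat n i j)) $$ (i',j'))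
      = (\<Sum>j'<n. \<Sum>i'<j'. X $$ (j',i') * (C $$ (i',i) * B $$ (j,j')))" by simp
  qed
  also have "\<dots> = (\<Sum>j'<n. \<Sum>i'<n. X $$ (j',i') * (C $$ (i',i) * B $$ (j,j')))"
  proof (rule sum.cong[OF refl])
    fix j' assume "j' \<in> {..<n}"
    hence j': "j' < n" by simp
    show "(\<Sum>i'<j'. X $$ (j',i') * (C $$ (i',i) * B $$ (j,j'))) =
          (\<Sum>i'<n. X $$ (j',i') * (C $$ (i',i) * B $$ (j,j')))"
      by (rule sum.mono_neutral_left) (use j' X0 in auto)
  qed
  also have "\<dots> = (\<Sum>b<n. \<Sum>a<n. B $$ (j,b) * X $$ (b,a) * C $$ (a,i))"
    by (simp add: algebra_simps)
  also have "\<dots> = (B * X * C) $$ (j,i)"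
    using B X C i j by (simp add: scalar_prod_def sum_distrib_left sum_distrib_right
        atLeast0LessThan algebra_simps)
  finally show ?thesis using xz by simp
qed


definition cornerm :: "nat \<Rightarrow> nat \<Rightarrow> 'a mat \<Rightarrow> 'a mat" where
  "cornerm n k X = mat k k (\<lambda>(p,q). X $$ (n - k + p, q))"

lemma corner_key:
  fixes B C X :: "'a::field mat"
  assumes B: "B \<in> carrier_mat n n" and C: "C \<in> carrier_mat n n" and X: "X \<in> carrier_mat n n"
    and CB: "C * B = 1\<^sub>m n" and ut: "upper_triangular B" and k: "k \<le> n"
  shows "cornerm n k (B * X * C) * mat k k (\<lambda>(p,q). B $$ (p,q))
       = mat k k (\<lambda>(p,q). B $$ (n - k + p, n - k + q)) * cornerm n k X"
proof -
  let ?Y = "B * X * C"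
  have Y: "?Y \<in> carrier_mat n n" using B X C by auto
  have YB: "?Y * B = B * X"
  proof -
    have "?Y * B = (B * X) * (C * B)"
      by (rule assoc_mult_mat[of "B * X" n n C n B n]) (use B X C in auto)
    also have "\<dots> = B * X" using CB B X by simp
    finally show ?thesis .
  qed
  have Bz: "\<And>a b. b < a \<Longrightarrow> a < n \<Longrightarrow> B $$ (a,b) = 0"
    using ut B by (auto simp: upper_triangular_def)
  show ?thesis
  proof (rule eq_matI)
    fix p q assume "p < dim_row (mat k k (\<lambda>(p,q). B $$ (n - k + p, n - k + q)) * cornerm n k X)"
      "q < dim_col (mat k k (\<lambda>(p,q). B $$ (n - k + p, n - k + q)) * cornerm n k X)"
    hence p: "p < k" and q: "q < k" by (auto simp: cornerm_def)
    have "(cornerm n k ?Y * mat k k (\<lambda>(p,q). B $$ (p,q))) $$ (p,q)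
        = (\<Sum>b\<in>{0..<k}. ?Y $$ (n-k+p, b) * B $$ (b,q))"
      using p q by (simp add: cornerm_def scalar_prod_def)
    also have "\<dots> = (\<Sum>b\<in>{0..<n}. ?Y $$ (n-k+p, b) * B $$ (b,q))"
      by (rule sum.mono_neutral_left) (use k q Bz in auto)
    also have "\<dots> = (?Y * B) $$ (n-k+p, q)"
      using p q k carrier_matD[OF Y] carrier_matD[OF B] by (simp add: scalar_prod_def)
    also have "\<dots> = (B * X) $$ (n-k+p, q)" by (simp add: YB)
    also have "\<dots> = (\<Sum>a\<in>{0..<n}. B $$ (n-k+p, a) * X $$ (a, q))"
      using p q k carrier_matD[OF X] carrier_matD[OF B] by (simp add: scalar_prod_def)
    also have "\<dots> = (\<Sum>a\<in>{n-k..<n}. B $$ (n-k+p, a) * X $$ (a, q))"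
      by (rule sum.mono_neutral_right) (use k p Bz in auto)
    also have "\<dots> = (\<Sum>a\<in>{0..<k}. B $$ (n-k+p, n-k+a) * X $$ (n-k+a, q))"
    proof -
      have "{n-k..<n} = {0 + (n-k)..<k + (n-k)}" using k by simp
      thus ?thesis by (simp only: sum.shift_bounds_nat_ivl) (simp add: add.commute)
    qed
    also have "\<dots> = (mat k k (\<lambda>(p,q). B $$ (n - k + p, n - k + q)) * cornerm n k X) $$ (p,q)"
      using p q by (simp add: cornerm_def scalar_prod_def)
    finally show "(cornerm n k ?Y * mat k k (\<lambda>(p,q). B $$ (p,q))) $$ (p,q) =
       (mat k k (\<lambda>(p,q). B $$ (n - k + p, n - k + q)) * cornerm n k X) $$ (p,q)" .
  qed (auto simp: cornerm_def)
qed


lemma rel_inv: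
  fixes \<gamma> :: "nat \<Rightarrow> 'a::{real_normed_field,banach}"
  assumes k: "k \<le> n div 2"
  shows "rel_invariant (T_gamma n \<gamma>) (coadj n \<gamma>) (dual_space n) (corner_minor n k)"
  unfolding rel_invariant_def
proof (intro exI ballI)
  fix B :: "'a mat" and xi :: "'a mat \<times> 'a"
  assume BT: "B \<in> T_gamma n \<gamma>" and xi: "xi \<in> dual_space n"
  from BT have B: "B \<in> carrier_mat n n" and ut: "upper_triangular B" and dB: "det B \<noteq> 0"
    and dg: "\<exists>\<epsilon>. \<forall>i<n. B $$ (i,i) = exp (\<gamma> i * \<epsilon>)"
    unfolding T_gamma_def by auto
  define C where "C = mat_inv B"
  have C: "C \<in> carrier_mat n n" and CB: "C * B = 1\<^sub>m n"
    using mat_inv_props[OF B dB] unfolding C_def by auto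
  obtain X z where xz: "xi = (X,z)" by (cases xi)
  have X: "X \<in> carrier_mat n n" using xi xz unfolding dual_space_def by auto
  have kn: "k \<le> n" using k by simp
  have eq: "cornerm n k (fst (coadj n \<gamma> B xi)) = cornerm n k (B * X * C)"
  proof (rule eq_matI)
    fix p q assume "p < dim_row (cornerm n k (B * X * C))" "q < dim_col (cornerm n k (B * X * C))"
    hence p: "p < k" and q: "q < k" by (auto simp: cornerm_def)
    have qlt: "q < n - k + p" using p q k by linarith
    have "fst (coadj n \<gamma> B xi) $$ (n - k + p, q) =
       pairing n xi (conj_elem n \<gamma> B (0, unit_mat n q (n - k + p)))"
      unfolding coadj_def using p q kn qlt by simp
    also have "\<dots> = (B * X * C) $$ (n - k + p, q)"
      using pairing_conj[OF xi B C C_def[symmetric], of q "n - k + p" \<gamma>] p q kn xz by simp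
    finally show "cornerm n k (fst (coadj n \<gamma> B xi)) $$ (p, q) = cornerm n k (B * X * C) $$ (p, q)"
      using p q by (simp add: cornerm_def)
  qed (auto simp: cornerm_def)
  let ?BL = "mat k k (\<lambda>(p,q). B $$ (p,q))"
  let ?BR = "mat k k (\<lambda>(p,q). B $$ (n - k + p, n - k + q))"
  have key: "cornerm n k (B * X * C) * ?BL = ?BR * cornerm n k X"
    by (rule corner_key[OF B C X CB ut kn])
  have "det (cornerm n k (B * X * C) * ?BL) = det (cornerm n k (B * X * C)) * det ?BL"
    by (rule det_mult) (auto simp: cornerm_def)
  moreover have "det (?BR * cornerm n k X) = det ?BR * det (cornerm n k X)"
    by (rule det_mult) (auto simp: cornerm_def)
  ultimately have dd: "det (cornerm n k (B * X * C)) * det ?BL = det ?BR * det (cornerm n k X)"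
    using key by simp
  have utL: "upper_triangular ?BL" using ut B kn by (auto simp: upper_triangular_def)
  have "det ?BL = prod_list (diag_mat ?BL)" by (rule det_upper_triangular[OF utL, of k]) simp
  moreover have "0 \<notin> set (diag_mat ?BL)"
    using dg kn by (auto simp: diag_mat_def)
  ultimately have nz: "det ?BL \<noteq> 0" by (simp add: prod_list_zero_iff)
  have "corner_minor n k (coadj n \<gamma> B xi) = det (cornerm n k (B * X * C))"
    using eq unfolding corner_minor_def cornerm_def by simp
  also have "\<dots> = det ?BR / det ?BL * det (cornerm n k X)"
    using dd nz by (simp add: field_simps)
  also have "det (cornerm n k X) = corner_minor n k xi"
    unfolding corner_minor_def cornerm_def xz by simp
  finally show "corner_minor n k (coadj n \<gamma> B xi) =
      (\<lambda>B xi. det (mat k k (\<lambda>(p,q). B $$ (n - k + p, n - k + q))) /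
               det (mat k k (\<lambda>(p,q). B $$ (p,q)))) B xi * corner_minor n k xi" by simp
qed


lemma corner_shift:
  fixes X :: "'a::comm_ring_1 mat"
  assumes X: "X \<in> carrier_mat n n" and j: "j < n" and i: "i < n" and k: "k \<le> n"
  shows "cornerm n k (X + t \<cdot>\<^sub>m unit_mat n j i) =
     mat k k (\<lambda>(p,q). X $$ (n-k+p, q) + (if n - k \<le> j \<and> p = j - (n-k) \<and> q = i then t else 0))"
proof (rule eq_matI)
  fix p q assume "p < dim_row (mat k k (\<lambda>(p,q). X $$ (n-k+p, q) + (if n - k \<le> j \<and> p = j - (n-k) \<and> q = i then t else 0)))"
    "q < dim_col (mat k k (\<lambda>(p,q). X $$ (n-k+p, q) + (if n - k \<le> j \<and> p = j - (n-k) \<and> q = i then t else 0)))"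
  hence p: "p < k" and q: "q < k" by auto
  have "(n - k + p = j) = (n - k \<le> j \<and> p = j - (n-k))" using k by auto
  thus "cornerm n k (X + t \<cdot>\<^sub>m unit_mat n j i) $$ (p, q) =
     mat k k (\<lambda>(p,q). X $$ (n-k+p, q) + (if n - k \<le> j \<and> p = j - (n-k) \<and> q = i then t else 0)) $$ (p,q)"
    using p q k X by (auto simp: cornerm_def unit_mat_def)
qed (auto simp: cornerm_def)

lemma shift_affine_ex:
  fixes xi :: "'a::field mat \<times> 'a"
  assumes xi: "xi \<in> dual_space n" and c: "c \<in> coords n" and k: "k \<le> n"
  shows "\<exists>K. \<forall>t. corner_minor n k (shift_coord n c t xi) = corner_minor n k xi + t * K"
proof (cases c)
  case None
  thus ?thesis by (intro exI[of _ 0]) (simp add: shift_coord_def corner_minor_def)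
next
  case (Some ji)
  then obtain j i where c': "c = Some (j,i)" by (cases ji) auto
  with c have ij: "i < j" "j < n" unfolding coords_def by auto
  hence iN: "i < n" by simp
  obtain X z where xz: "xi = (X,z)" by (cases xi)
  have X: "X \<in> carrier_mat n n" using xi xz unfolding dual_space_def by auto
  have cm: "\<And>t. corner_minor n k (shift_coord n c t xi) = det (cornerm n k (X + t \<cdot>\<^sub>m unit_mat n j i))"
    unfolding corner_minor_def shift_coord_def c' xz cornerm_def by simp
  have cm0: "corner_minor n k xi = det (cornerm n k X)"
    unfolding corner_minor_def xz cornerm_def by simp
  have CX: "cornerm n k X \<in> carrier_mat k k" by (simp add: cornerm_def)
  show ?thesis
  proof (cases "n - k \<le> j")
    case True
    have a: "j - (n-k) < k" using True ij k by linarith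
    {
      fix t
      have "cornerm n k (X + t \<cdot>\<^sub>m unit_mat n j i) =
        mat k k (\<lambda>(p,q). cornerm n k X $$ (p,q) + (if p = j - (n-k) \<and> q = i then t else 0))"
        unfolding corner_shift[OF X ij(2) iN k] using ij True
        by (intro eq_matI) (auto simp: cornerm_def)
      hence "corner_minor n k (shift_coord n c t xi) = corner_minor n k xi + t * Kf k (cornerm n k X) (j - (n-k)) i"
        unfolding cm cm0 using det_affine[OF CX a] by simp
    }
    thus ?thesis by blast
  next
    case False
    {
      fix t
      have "cornerm n k (X + t \<cdot>\<^sub>m unit_mat n j i) = cornerm n k X"
        unfolding corner_shift[OF X ij(2) iN k] using ij False
        by (intro eq_matI) (auto simp: cornerm_def)
      hence "corner_minor n k (shift_coord n c t xi) = corner_minor n k xi + t * 0"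
        unfolding cm cm0 by simp
    }
    thus ?thesis by blast
  qed
qed

lemma shift_affine:
  fixes xi :: "'a::field mat \<times> 'a"
  assumes xi: "xi \<in> dual_space n" and c: "c \<in> coords n" and k: "k \<le> n"
  shows "corner_minor n k (shift_coord n c t xi) = corner_minor n k xi
      + t * (corner_minor n k (shift_coord n c 1 xi) - corner_minor n k xi)"
proof -
  obtain K where K: "\<And>t. corner_minor n k (shift_coord n c t xi) = corner_minor n k xi + t * K"
    using shift_affine_ex[OF xi c k] by blast
  show ?thesis using K[of t] K[of 1] by simp
qed


definition P0 :: "nat \<Rightarrow> 'a::comm_ring_1 mat" where
  "P0 n = mat n n (\<lambda>(j,i). if i + j = n - 1 \<and> i < j then 1 else 0)"

lemma P0_dual: "(P0 n, 0) \<in> dual_space n"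
  unfolding dual_space_def P0_def by auto

lemma corner_P0:
  assumes k: "k \<le> n div 2"
  shows "cornerm n k (P0 n) = (antid k :: 'a::comm_ring_1 mat)"
proof (rule eq_matI)
  fix p q assume "p < dim_row (antid k :: 'a mat)" "q < dim_col (antid k :: 'a mat)"
  hence p: "p < k" and q: "q < k" by (auto simp: antid_def)
  have 1: "q < n - k + p" using k p q by linarith
  have 2: "(q + (n - k + p) = n - 1) = (p + q = k - 1)" using k p q by linarith
  show "cornerm n k (P0 n) $$ (p, q) = (antid k :: 'a mat) $$ (p, q)"
    using p q k 1 2 by (simp add: cornerm_def P0_def antid_def)
qed (auto simp: cornerm_def antid_def)

lemma D_diag:
  assumes k1: "1 \<le> k" and k: "k \<le> n div 2"
  shows "corner_minor n k (shift_coord n (Some (n-k, k-1)) 1 (P0 n, 0))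
         - corner_minor n k (P0 n, 0 :: 'a::field) \<noteq> 0"
proof -
  have kn: "k \<le> n" using k by simp
  have X: "(P0 n :: 'a mat) \<in> carrier_mat n n" by (simp add: P0_def)
  have j: "n - k < n" and i: "k - 1 < n" using k1 kn by auto
  have A: "(antid k :: 'a mat) \<in> carrier_mat k k" by (simp add: antid_def)
  have a0: "0 < k" using k1 by simp
  have "cornerm n k (P0 n + 1 \<cdot>\<^sub>m unit_mat n (n-k) (k-1)) =
     mat k k (\<lambda>(p,q). (antid k :: 'a mat) $$ (p,q) + (if p = 0 \<and> q = k - 1 then 1 else 0))"
    unfolding corner_shift[OF X j i kn] corner_P0[OF k, symmetric]
    by (intro eq_matI) (auto simp: cornerm_def)
  hence 1: "corner_minor n k (shift_coord n (Some (n-k, k-1)) 1 (P0 n, 0))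
       = det (antid k :: 'a mat) + 1 * Kf k (antid k :: 'a mat) 0 (k-1)"
    unfolding corner_minor_def shift_coord_def using det_affine[OF A a0, of "k-1" 1]
    by (simp add: cornerm_def)
  have 2: "corner_minor n k (P0 n, 0 :: 'a) = det (antid k :: 'a mat)"
    using corner_P0[OF k] unfolding corner_minor_def cornerm_def fst_conv by (rule arg_cong)
  have 3: "det (antid k :: 'a mat) = Kf k (antid k :: 'a mat) 0 (k-1)"
    by (rule det_unit_row[OF A a0]) (auto simp: antid_def)
  show ?thesis unfolding 1 2 using 3 det_antid[of k, where 'a='a] by simp
qed

lemma D_off:
  assumes k1: "1 \<le> k" and k: "k \<le> n div 2" and k': "k' < k"
  shows "corner_minor n k' (shift_coord n (Some (n-k, k-1)) 1 (P0 n, 0))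
         - corner_minor n k' (P0 n, 0 :: 'a::field) = 0"
proof -
  have kn: "k' \<le> n" using k k' by simp
  have X: "(P0 n :: 'a mat) \<in> carrier_mat n n" by (simp add: P0_def)
  have j: "n - k < n" and i: "k - 1 < n" using k1 k by auto
  have "cornerm n k' (P0 n + 1 \<cdot>\<^sub>m unit_mat n (n-k) (k-1)) = cornerm n k' (P0 n :: 'a mat)"
    unfolding corner_shift[OF X j i kn] using k k'
    by (intro eq_matI) (auto simp: cornerm_def)
  thus ?thesis unfolding corner_minor_def shift_coord_def by (simp add: cornerm_def)
qed

lemma funct_part:
  fixes n :: nat
  shows "funct_indep n (corner_minor n :: nat \<Rightarrow> 'a::{real_normed_field,banach} mat \<times> 'a \<Rightarrow> 'a) {1..n div 2}"
proof -
  let ?N = "n div 2"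
  let ?x = "(P0 n, 0 :: 'a)"
  define D where "D k c = corner_minor n k (shift_coord n c 1 ?x) - corner_minor n k ?x" for k c
  have der: "((\<lambda>t. corner_minor n k (shift_coord n c t ?x)) has_field_derivative D k c) (at 0)"
    if "k \<in> {1..?N}" "c \<in> coords n" for k c
  proof -
    have kn: "k \<le> n" using that by auto
    have "(\<lambda>t. corner_minor n k (shift_coord n c t ?x)) = (\<lambda>t. corner_minor n k ?x + t * D k c)"
      unfolding D_def using shift_affine[OF P0_dual that(2) kn] by blast
    moreover have "((\<lambda>t. corner_minor n k ?x + t * D k c) has_field_derivative D k c) (at 0)"
      by (auto intro!: derivative_eq_intros)
    ultimately show ?thesis by simp
  qed
  have indep: "\<forall>k\<in>{1..?N}. a k = 0"
    if h: "\<forall>c\<in>coords n. (\<Sum>k\<in>{1..?N}. a k * D k c) = 0" for a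
  proof -
    have "a k = 0" if "k \<in> {1..?N}" for k
      using that
    proof (induction "?N - k" arbitrary: k rule: less_induct)
      case less
      have k1: "1 \<le> k" and kN: "k \<le> ?N" using less.prems by auto
      have cc: "Some (n-k, k-1) \<in> coords n" unfolding coords_def using k1 kN by auto
      have "(\<Sum>k'\<in>{1..?N}. a k' * D k' (Some (n-k, k-1))) = a k * D k (Some (n-k, k-1))"
      proof -
        have z: "(\<Sum>k'\<in>{1..?N} - {k}. a k' * D k' (Some (n-k, k-1))) = 0"
        proof (rule sum.neutral, rule ballI)
        fix k' assume k'': "k' \<in> {1..?N} - {k}"
        hence k': "k' \<in> {1..?N}" "k' \<noteq> k" by auto
        show "a k' * D k' (Some (n-k, k-1)) = 0"
        proof (cases "k' < k")
          case True
          thus ?thesis unfolding D_def using D_off[OF k1 kN True, where 'a='a] by simp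
        next
          case False
          hence "?N - k' < ?N - k" using k' kN by auto
          hence "a k' = 0" using less.hyps k' by blast
          thus ?thesis by simp
        qed
        qed
        show ?thesis using z less.prems by (subst sum.remove[of _ k]) auto
      qed
      hence "a k * D k (Some (n-k, k-1)) = 0" using h cc by simp
      moreover have "D k (Some (n-k, k-1)) \<noteq> 0" unfolding D_def using D_diag[OF k1 kN] .
      ultimately show ?case by simp
    qed
    thus ?thesis by blast
  qed
  show ?thesis
    unfolding funct_indep_def
  proof (rule bexI[where x="?x"])
    show "?x \<in> dual_space n" by (rule P0_dual)
    show "\<exists>D. (\<forall>k\<in>{1..?N}. \<forall>c\<in>coords n.
        ((\<lambda>t. corner_minor n k (shift_coord n c t ?x)) has_field_derivative D k c) (at 0)) \<and>
        (\<forall>a. (\<forall>c\<in>coords n. (\<Sum>k\<in>{1..?N}. a k * D k c) = 0) \<longrightarrow> (\<forall>k\<in>{1..?N}. a k = 0))"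
      using der indep by blast
  qed
qed

theorem corollary1:
  fixes n :: nat and \<gamma> :: "nat \<Rightarrow> 'a::{real_normed_field,banach}"
  assumes "n > 1"
    and "\<not> (\<exists>c. \<forall>i<n. \<gamma> i = c)"
  shows "(\<forall>k\<in>{1..n div 2}.
            rel_invariant (T_gamma n \<gamma>) (coadj n \<gamma>) (dual_space n) (corner_minor n k))
       \<and> funct_indep n (corner_minor n) {1..n div 2}"
proof
  show "\<forall>k\<in>{1..n div 2}. rel_invariant (T_gamma n \<gamma>) (coadj n \<gamma>) (dual_space n) (corner_minor n k)"
    using rel_inv by auto
next
  show "funct_indep n (corner_minor n) {1..n div 2}" by (rule funct_part)
qed

end
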